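(* In the setting below, the 2-form $\Xi$ on $TM$ is closed if and only if it is identically zero.
   Context: $G$ acts freely and properly on the left on $Q$, $\pi:Q\to M=Q/G$ is the principal bundle, $\gamma$ a principal connection on $\pi$ with horizontal lift $u\mapsto u^h$ and curvature $\Omega^\gamma(u,v)=d\gamma(\mathbf h_\gamma u,\mathbf h_\gamma v)$, $g$ a $G$-invariant Riemannian metric on $Q$, $\tilde g_x(u,v)=g_q(u^h_q,v^h_q)$ the induced metric on $M$, $\tilde K_x(u,v,w)=g_q\big(u^h_q,(\Omega^\gamma(v^h_q,w^h_q))_Q(q)\big)$, and $B$ the $(1,2)$-tensor field on $M$ with $\tilde g(B(X,Y),Z)=\tilde K(X,Y,Z)$. $\Xi$ is the 2-form on $TM$ defined by $\Xi(Y,Z)(w)=\tilde g_{x}\big(B(w,T\tau_M Y_w),T\tau_M Z_w\big)$ for $w\in T_xM$, $Y,Z$ vector fields on $TM$, $\tau_M:TM\to M$ the projection (in coordinates $\Xi=\sum_{a<b}\dot q^eB^c_{ea}\tilde g_{bc}\,dq^a\wedge dq^b$). *)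

theory Defs
  imports "HOL-Analysis.Analysis"
begin

text \<open>A chart of M is an open set U of real^'n
(coordinates q); TU = U x real^'n with fibre coordinates v (= qdot).
Coordinates on TU are indexed by 'n + 'n: Inl a is q^a, Inr a is v^a.
A 2-form on TU is given by its (antisymmetric) coefficient matrix
w x I J, i.e. w = (1/2) sum_{I,J} w_{IJ} dx^I wedge dx^J.\<close>

definition coord_vec :: "('n::finite) + 'n \<Rightarrow> (real^'n) \<times> (real^'n)" where
  "coord_vec I = (case I of Inl a \<Rightarrow> (axis a 1, 0) | Inr a \<Rightarrow> (0, axis a 1))"

definition partial_coord ::
  "((real^'n) \<times> (real^'n) \<Rightarrow> real) \<Rightarrow> (real^'n) \<times> (real^'n) \<Rightarrow> ('n::finite) + 'n \<Rightarrow> real" where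
  "partial_coord f x I = deriv (\<lambda>t. f (x + t *\<^sub>R coord_vec I)) 0"

definition closed_2form ::
  "((real^'n) \<times> (real^'n)) set \<Rightarrow> ((real^'n) \<times> (real^'n) \<Rightarrow> ('n::finite) + 'n \<Rightarrow> 'n + 'n \<Rightarrow> real) \<Rightarrow> bool" where
  "closed_2form S w \<longleftrightarrow> (\<forall>x\<in>S. \<forall>I J L.
     partial_coord (\<lambda>y. w y J L) x I + partial_coord (\<lambda>y. w y L I) x J
       + partial_coord (\<lambda>y. w y I J) x L = 0)"

text \<open>The 2-form Xi on TU: Xi(Y,Z)(w) = g(B(w, T tau Y), T tau Z).
In coordinates, with B q e a c = B^c_{ea}(q) and g q b c = g_{bc}(q),
its coefficient on dq^a wedge dq^b is sum_{e,c} qdot^e B^c_{ea} g_{bc};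
all components involving dqdot vanish.\<close>
definition Xi_coeff ::
  "(real^'n \<Rightarrow> 'n \<Rightarrow> 'n \<Rightarrow> real) \<Rightarrow> (real^'n \<Rightarrow> 'n \<Rightarrow> 'n \<Rightarrow> 'n \<Rightarrow> real)
   \<Rightarrow> (real^'n) \<times> (real^'n) \<Rightarrow> ('n::finite) + 'n \<Rightarrow> 'n + 'n \<Rightarrow> real" where
  "Xi_coeff g B x I J = (case (I, J) of
      (Inl a, Inl b) \<Rightarrow> (\<Sum>e\<in>UNIV. \<Sum>c\<in>UNIV. snd x $ e * B (fst x) e a c * g (fst x) b c)
    | _ \<Rightarrow> 0)"

end

theory Submission
  imports Defs
begin

lemma xi_fst_add: "fst (x + t *\<^sub>R coord_vec (Inr e)) = fst x"
  by (simp add: coord_vec_def)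

lemma pc_mixed1: "partial_coord (\<lambda>y. Xi_coeff g B y (Inl a) (Inr b)) x I = 0"
  by (simp add: partial_coord_def Xi_coeff_def)

lemma pc_mixed2: "partial_coord (\<lambda>y. Xi_coeff g B y (Inr a) J) x I = 0"
  by (simp add: partial_coord_def Xi_coeff_def split: sum.splits)

lemma pc_main:
  "partial_coord (\<lambda>y. Xi_coeff g B y (Inl a) (Inl b)) x (Inr e)
     = (\<Sum>c\<in>UNIV. B (fst x) e a c * g (fst x) b c)"
proof -
  let ?q = "fst x" and ?v = "snd x"
  have eq: "(\<lambda>t. Xi_coeff g B (x + t *\<^sub>R coord_vec (Inr e)) (Inl a) (Inl b))
     = (\<lambda>t. (\<Sum>e'\<in>UNIV. \<Sum>c\<in>UNIV. (?v $ e' + t * axis e 1 $ e') * B ?q e' a c * g ?q b c))"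
    by (simp add: Xi_coeff_def coord_vec_def)
  have D: "((\<lambda>t. (\<Sum>e'\<in>UNIV. \<Sum>c\<in>UNIV. (?v $ e' + t * axis e 1 $ e') * B ?q e' a c * g ?q b c))
     has_field_derivative (\<Sum>e'\<in>UNIV. \<Sum>c\<in>UNIV. (axis e 1 $ e') * B ?q e' a c * g ?q b c)) (at 0)"
    by (auto intro!: derivative_eq_intros)
  have V: "(\<Sum>e'\<in>UNIV. \<Sum>c\<in>UNIV. (axis e 1 $ e') * B ?q e' a c * g ?q b c)
      = (\<Sum>c\<in>UNIV. B ?q e a c * g ?q b c)"
  proof -
    have "(\<Sum>e'\<in>UNIV. \<Sum>c\<in>UNIV. (axis e 1 $ e') * B ?q e' a c * g ?q b c)
       = (\<Sum>e'\<in>UNIV. if e' = e then (\<Sum>c\<in>UNIV. B ?q e' a c * g ?q b c) else 0)"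
      by (rule sum.cong[OF refl], cases "e' = e") (simp_all add: axis_def)
    then show ?thesis by simp
  qed
  show ?thesis unfolding partial_coord_def eq
    by (rule DERIV_imp_deriv) (rule D[unfolded V])
qed

lemma pc_zero:
  assumes "open U" "fst x \<in> U"
    and Z: "\<And>y. fst y \<in> U \<Longrightarrow> Xi_coeff g B y J L = 0"
  shows "partial_coord (\<lambda>y. Xi_coeff g B y J L) x I = 0"
proof -
  have c: "continuous_on UNIV (\<lambda>t::real. fst (x + t *\<^sub>R coord_vec I))"
    by (intro continuous_intros)
  have o: "open ((\<lambda>t::real. fst (x + t *\<^sub>R coord_vec I)) -` U)"
    using open_vimage[OF assms(1) c] by simp
  have "eventually (\<lambda>t. t \<in> (\<lambda>t::real. fst (x + t *\<^sub>R coord_vec I)) -` U) (nhds (0::real))"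
    by (rule eventually_nhds_in_open[OF o]) (simp add: assms(2))
  then have "eventually (\<lambda>t. fst (x + t *\<^sub>R coord_vec I) \<in> U) (nhds (0::real))"
    by simp
  then have "eventually (\<lambda>t. Xi_coeff g B (x + t *\<^sub>R coord_vec I) J L = 0) (nhds (0::real))"
    by (rule eventually_mono) (rule Z)
  then have "deriv (\<lambda>t. Xi_coeff g B (x + t *\<^sub>R coord_vec I) J L) 0 = deriv (\<lambda>t. 0) 0"
    by (rule deriv_cong_ev) simp
  then show ?thesis by (simp add: partial_coord_def)
qed

theorem proposition7p2:
  fixes U :: "(real^'n::finite) set"
    and g :: "real^'n \<Rightarrow> 'n \<Rightarrow> 'n \<Rightarrow> real"
    and B :: "real^'n \<Rightarrow> 'n \<Rightarrow> 'n \<Rightarrow> 'n \<Rightarrow> real"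
  assumes U_open: "open U"
    and g_smooth: "\<And>b c. \<forall>q\<in>U. (\<lambda>q. g q b c) differentiable (at q)"
    and B_smooth: "\<And>e a c. \<forall>q\<in>U. (\<lambda>q. B q e a c) differentiable (at q)"
    and g_sym: "\<And>q b c. q \<in> U \<Longrightarrow> g q b c = g q c b"
    and g_pos: "\<And>q (v::real^'n). q \<in> U \<Longrightarrow> v \<noteq> 0 \<Longrightarrow> (\<Sum>b\<in>UNIV. \<Sum>c\<in>UNIV. v $ b * g q b c * v $ c) > 0"
    and K_antisym: "\<And>q e a b. q \<in> U \<Longrightarrow>
        (\<Sum>c\<in>UNIV. B q e a c * g q b c) = - (\<Sum>c\<in>UNIV. B q e b c * g q a c)"
  shows "closed_2form (U \<times> UNIV) (Xi_coeff g B) \<longleftrightarrow>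
         (\<forall>x\<in>U \<times> UNIV. \<forall>I J. Xi_coeff g B x I J = 0)"
proof
  assume cl: "closed_2form (U \<times> UNIV) (Xi_coeff g B)"
  have K0: "(\<Sum>c\<in>UNIV. B q e a c * g q b c) = 0" if "q \<in> U" for q e a b
  proof -
    have "partial_coord (\<lambda>y. Xi_coeff g B y (Inl a) (Inl b)) (q, 0) (Inr e)
       + partial_coord (\<lambda>y. Xi_coeff g B y (Inl b) (Inr e)) (q, 0) (Inl a)
       + partial_coord (\<lambda>y. Xi_coeff g B y (Inr e) (Inl a)) (q, 0) (Inl b) = 0"
      using cl that unfolding closed_2form_def by blast
    then show ?thesis by (simp add: pc_main pc_mixed1 pc_mixed2)
  qed
  show "\<forall>x\<in>U \<times> UNIV. \<forall>I J. Xi_coeff g B x I J = 0"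
  proof (intro ballI allI)
    fix x I J assume x: "x \<in> (U \<times> (UNIV :: (real^'n) set))"
    have "(\<Sum>e\<in>UNIV. \<Sum>c\<in>UNIV. snd x $ e * B (fst x) e a c * g (fst x) b c) = 0" for a b
    proof -
      have "(\<Sum>e\<in>UNIV. \<Sum>c\<in>UNIV. snd x $ e * B (fst x) e a c * g (fst x) b c)
          = (\<Sum>e\<in>UNIV. snd x $ e * (\<Sum>c\<in>UNIV. B (fst x) e a c * g (fst x) b c))"
        by (simp add: sum_distrib_left mult.assoc)
      also have "\<dots> = 0" using K0 x by auto
      finally show ?thesis .
    qed
    then show "Xi_coeff g B x I J = 0"
      by (simp add: Xi_coeff_def split: sum.splits)
  qed
next
  assume Z: "\<forall>x\<in>U \<times> UNIV. \<forall>I J. Xi_coeff g B x I J = 0"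
  have Z': "Xi_coeff g B y J L = 0" if "fst y \<in> U" for y J L
    using Z that by (cases y) auto
  show "closed_2form (U \<times> UNIV) (Xi_coeff g B)"
    unfolding closed_2form_def
    using pc_zero[OF U_open _ Z'] by auto
qed

end
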